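(* Let $\gamma>0$, $\tilde T>0$, and let $\zeta_1,\dots,\zeta_M\in\mathbb{R}$. For $i\in E$ define $$\alpha_i=\frac{\zeta_i^2}{2}+\sum_{j\in E\setminus\{i\}}\Big(\tilde q_{ij}\log\frac{\tilde q_{ij}}{q_{ij}}-\tilde q_{ij}+q_{ij}\Big),$$ let $\boldsymbol\alpha=(\alpha_1,\dots,\alpha_M)'$ and define $\boldsymbol\varphi(t)=(\varphi_1(t),\dots,\varphi_M(t))'$ by $$\boldsymbol\varphi(t)=-\int_t^{\tilde T}\exp\big(\tilde{\mathbf Q}(\tilde T-s)\big)\boldsymbol\alpha\,ds,\qquad t\in[0,\tilde T].$$ Then $\boldsymbol\varphi$ is the unique solution of the linear ODE system $$\varphi_i'(t)-\sum_{j\in E\setminus\{i\}}\tilde q_{ij}\big(\varphi_i(t)-\varphi_j(t)\big)-\alpha_i=0,\quad \varphi_i(\tilde T)=0,\quad i\in E,$$ and the functions $u_i(t,w)=-\exp(-\gamma w+\varphi_i(t))$, $i\in E$, form a classical solution on $[0,\tilde T]\times\mathbb{R}$ of the HJB system $$\partial_t u_i+\sup_{(\tilde\pi^{(0)},(\tilde\pi^{(j)})_{j\ne i})}\Big\{\Big(\zeta_i\tilde\pi^{(0)}-\sum_{j\in E\setminus\{i\}}\tilde q_{ij}\tilde\pi^{(j)}\Big)\partial_w u_i+\frac{(\tilde\pi^{(0)})^2}{2}\partial_{ww}u_i+\sum_{j\in E\setminus\{i\}}q_{ij}\big(u_j(t,w+\tilde\pi^{(j)})-u_i(t,w)\big)\Big\}=0,$$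 $i\in E$, $t\in[0,\tilde T)$, with terminal condition $u_i(\tilde T,w)=-e^{-\gamma w}$. Moreover $\partial_{ww}u_i=\gamma^2u_i<0$, and for each $(t,w,i)$ the supremum is attained (uniquely) at $$\tilde\pi^{(0)*}_i=\frac{\zeta_i}{\gamma},\qquad \tilde\pi^{(j)*}_i(t)=-\frac1\gamma\Big(\log\frac{\tilde q_{ij}}{q_{ij}}+\varphi_i(t)-\varphi_j(t)\Big),\quad j\in E\setminus\{i\},$$ which does not depend on $w$.
   Context: $E=\{1,\dots,M\}$. $\tilde{\mathbf Q}=(\tilde q_{ij})$ and $\mathbf Q=(q_{ij})$ are the generator matrices of a continuous-time irreducible Markov chain $\xi$ on $E$ under the risk-neutral measure $\mathbb Q$ and the physical measure $\mathbb P$ respectively (off-diagonal entries nonnegative, rows summing to zero), with $q_{ij}=0$ iff $\tilde q_{ij}=0$. All sums $\sum_{j\in E\setminus\{i\}}$ involving $\log(\tilde q_{ij}/q_{ij})$ are understood to run only over $j$ with $q_{ij}>0$ (terms with $q_{ij}=\tilde q_{ij}=0$ are omitted, and for such $j$ the corresponding variable $\tilde\pi^{(j)}$ does not appear). $\zeta_i$ is the market price of (Brownian) risk in regime $i$, i.e. $dZ^{\mathbb Q}_t=dZ^{\mathbb P}_t+\zeta(\xi_t)dt$. In the financial interpretation, $u_i(t,w)$ is the value function $\sup \mathbb E[-e^{-\gamma W_{\tilde T}}\mid W_t=w,\xi_t=i]$ of an investor trading futures, with transformed controls $\tilde\pi$ and wealth dynamics $dW_t=(\zeta(\xi_t)\tilde\pi^{(0)}_t+\sum_{j\neq\xi_t}(q(\xi_t,j)-\tilde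 q(\xi_t,j))\tilde\pi^{(j)}_t)dt+\tilde\pi^{(0)}_tdZ^{\mathbb P}_t+$ (jump of size $\tilde\pi^{(j)}_t$ when $\xi$ jumps from $\xi_{t-}$ to $j$, compensated under $\mathbb P$). *)

theory Defs
  imports "HOL-Analysis.Analysis"
begin

text \<open>The state space E is represented by a finite type 'n (so M = CARD('n)).
  Matrices are elements of real^'n^'n, entry (i,j) is A $ i $ j.\<close>

definition generator :: "real^'n^'n \<Rightarrow> bool" where
  "generator A \<longleftrightarrow> (\<forall>i j. i \<noteq> j \<longrightarrow> A $ i $ j \<ge> 0) \<and> (\<forall>i. (\<Sum>j\<in>UNIV. A $ i $ j) = 0)"

definition irreducible_gen :: "real^'n^'n \<Rightarrow> bool" where
  "irreducible_gen A \<longleftrightarrow> (\<forall>i j. (i, j) \<in> {(a, b). a \<noteq> b \<and> A $ a $ b > 0}\<^sup>*)"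

primrec matpow :: "real^'n^'n \<Rightarrow> nat \<Rightarrow> real^'n^'n" where
  "matpow A 0 = mat 1"
| "matpow A (Suc k) = A ** matpow A k"

definition mexp :: "real^'n^'n \<Rightarrow> real^'n^'n" where
  "mexp A = (\<Sum>k. (1 / fact k) *\<^sub>R matpow A k)"

definition alpha :: "real^'n^'n \<Rightarrow> real^'n^'n \<Rightarrow> ('n \<Rightarrow> real) \<Rightarrow> 'n \<Rightarrow> real" where
  "alpha Q Qt \<zeta> i = (\<zeta> i)\<^sup>2 / 2
     + (\<Sum>j\<in>{j. j \<noteq> i \<and> Q $ i $ j > 0}.
          Qt $ i $ j * ln (Qt $ i $ j / Q $ i $ j) - Qt $ i $ j + Q $ i $ j)"

definition alpha_vec :: "real^'n^'n \<Rightarrow> real^'n^'n \<Rightarrow> ('n \<Rightarrow> real) \<Rightarrow> real^'n" where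
  "alpha_vec Q Qt \<zeta> = (\<chi> i. alpha Q Qt \<zeta> i)"

definition phi :: "real \<Rightarrow> real^'n^'n \<Rightarrow> real^'n^'n \<Rightarrow> ('n \<Rightarrow> real) \<Rightarrow> real \<Rightarrow> real^'n" where
  "phi T Q Qt \<zeta> t = - integral {t..T} (\<lambda>s. mexp ((T - s) *\<^sub>R Qt) *v alpha_vec Q Qt \<zeta>)"

definition ode_rhs :: "real^'n^'n \<Rightarrow> real^'n^'n \<Rightarrow> ('n \<Rightarrow> real) \<Rightarrow> real^'n \<Rightarrow> 'n \<Rightarrow> real" where
  "ode_rhs Q Qt \<zeta> x i = (\<Sum>j\<in>UNIV - {i}. Qt $ i $ j * (x $ i - x $ j)) + alpha Q Qt \<zeta> i"

definition uval :: "real \<Rightarrow> real \<Rightarrow> real^'n^'n \<Rightarrow> real^'n^'n \<Rightarrow> ('n \<Rightarrow> real) \<Rightarrow> 'n \<Rightarrow> real \<Rightarrow> real \<Rightarrow> real" where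
  "uval \<gamma> T Q Qt \<zeta> i t w = - exp (- \<gamma> * w + phi T Q Qt \<zeta> t $ i)"

text \<open>The quantity inside the supremum of the HJB equation, for state i, given
  the values ut, uw, uww of the partial derivatives and the value function v,
  at control (p0, p) where p j is the jump control towards state j.\<close>
definition hjb_term :: "real^'n^'n \<Rightarrow> real^'n^'n \<Rightarrow> ('n \<Rightarrow> real) \<Rightarrow> ('n \<Rightarrow> real \<Rightarrow> real)
    \<Rightarrow> 'n \<Rightarrow> real \<Rightarrow> real \<Rightarrow> real \<Rightarrow> real \<times> ('n \<Rightarrow> real) \<Rightarrow> real" where
  "hjb_term Q Qt \<zeta> v i w uw uww c =
     (\<zeta> i * fst c - (\<Sum>j\<in>UNIV - {i}. Qt $ i $ j * snd c j)) * uw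
     + (fst c)\<^sup>2 / 2 * uww
     + (\<Sum>j\<in>UNIV - {i}. Q $ i $ j * (v j (w + snd c j) - v i w))"

definition pi_star :: "real \<Rightarrow> real \<Rightarrow> real^'n^'n \<Rightarrow> real^'n^'n \<Rightarrow> ('n \<Rightarrow> real) \<Rightarrow> 'n \<Rightarrow> real \<Rightarrow> 'n \<Rightarrow> real" where
  "pi_star \<gamma> T Q Qt \<zeta> i t j =
     - (1 / \<gamma>) * (ln (Qt $ i $ j / Q $ i $ j) + phi T Q Qt \<zeta> t $ i - phi T Q Qt \<zeta> t $ j)"

end

theory Submission
  imports Defs
begin


lemma matpow_entry_bound:
  fixes A :: "real^'n^'n"
  shows "\<bar>matpow A k $ i $ j\<bar> \<le> (\<Sum>a\<in>UNIV. \<Sum>b\<in>UNIV. \<bar>A $ a $ b\<bar>) ^ k"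
proof (induction k arbitrary: i j)
  case 0
  then show ?case by (simp add: mat_def)
next
  case (Suc k)
  let ?m = "\<Sum>a\<in>UNIV. \<Sum>b\<in>UNIV. \<bar>A $ a $ b\<bar>"
  have "\<bar>matpow A (Suc k) $ i $ j\<bar> = \<bar>\<Sum>l\<in>UNIV. A $ i $ l * matpow A k $ l $ j\<bar>"
    by (simp add: matrix_matrix_mult_def)
  also have "\<dots> \<le> (\<Sum>l\<in>UNIV. \<bar>A $ i $ l\<bar> * ?m ^ k)"
    by (rule order_trans[OF sum_abs], rule sum_mono, simp add: abs_mult mult_left_mono Suc.IH)
  also have "\<dots> = (\<Sum>l\<in>UNIV. \<bar>A $ i $ l\<bar>) * ?m ^ k"
    by (simp add: sum_distrib_right)
  also have "\<dots> \<le> ?m * ?m ^ k"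
  proof (rule mult_right_mono)
    show "(\<Sum>l\<in>UNIV. \<bar>A $ i $ l\<bar>) \<le> ?m"
      by (rule member_le_sum[of i UNIV "\<lambda>a. \<Sum>b\<in>UNIV. \<bar>A $ a $ b\<bar>"]) (auto intro: sum_nonneg)
    show "0 \<le> ?m ^ k" by (simp add: sum_nonneg)
  qed
  finally show ?case by simp
qed

lemma matpow_scale:
  fixes A :: "real^'n^'n"
  shows "matpow (c *\<^sub>R A) k = c ^ k *\<^sub>R matpow A k"
  by (induction k) (auto simp: vec_eq_iff matrix_matrix_mult_def sum_distrib_left mult_ac)

definition es :: "real^'n^'n \<Rightarrow> 'n \<Rightarrow> 'n \<Rightarrow> nat \<Rightarrow> real" where
  "es A i j n = matpow A n $ i $ j / fact n"

lemma es_summable: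
  fixes A :: "real^'n^'n"
  shows "summable (\<lambda>n. es A i j n * y ^ n)"
proof (rule summable_comparison_test)
  let ?m = "\<Sum>a\<in>UNIV. \<Sum>b\<in>UNIV. \<bar>A $ a $ b\<bar>"
  show "summable (\<lambda>n. inverse (fact n) * (?m * \<bar>y\<bar>) ^ n)" by (rule summable_exp)
  show "\<exists>N. \<forall>n\<ge>N. norm (es A i j n * y ^ n) \<le> inverse (fact n) * (?m * \<bar>y\<bar>) ^ n"
  proof (intro exI allI impI)
    fix n :: nat
    have "norm (es A i j n * y ^ n) = \<bar>matpow A n $ i $ j\<bar> * \<bar>y\<bar>^n / fact n"
      by (simp add: es_def abs_mult power_abs)
    also have "\<dots> \<le> ?m ^ n * \<bar>y\<bar>^n / fact n"
      by (intro divide_right_mono mult_right_mono matpow_entry_bound) auto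
    finally show "norm (es A i j n * y ^ n) \<le> inverse (fact n) * (?m * \<bar>y\<bar>) ^ n"
      by (simp add: power_mult_distrib divide_inverse mult_ac)
  qed
qed

lemma mexp_summable:
  fixes A :: "real^'n^'n"
  shows "summable (\<lambda>k. (1 / fact k) *\<^sub>R matpow A k)"
proof (rule summable_comparison_test)
  let ?m = "\<Sum>a\<in>UNIV. \<Sum>b\<in>UNIV. \<bar>A $ a $ b\<bar>"
  show "summable (\<lambda>n. real (CARD('n) * CARD('n)) * (inverse (fact n) * ?m ^ n))"
    by (rule summable_mult, rule summable_exp)
  show "\<exists>N. \<forall>n\<ge>N. norm ((1 / fact n) *\<^sub>R matpow A n) \<le> real (CARD('n) * CARD('n)) * (inverse (fact n) * ?m ^ n)"
  proof (intro exI allI impI)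
    fix n :: nat
    have "norm ((1 / fact n) *\<^sub>R matpow A n) \<le> (\<Sum>a\<in>UNIV. norm (((1 / fact n) *\<^sub>R matpow A n) $ a))"
      by (simp add: norm_vec_def L2_set_le_sum)
    also have "\<dots> \<le> (\<Sum>a\<in>(UNIV::'n set). \<Sum>b\<in>(UNIV::'n set). inverse (fact n) * ?m ^ n)"
    proof (rule sum_mono)
      fix a
      have "norm (((1 / fact n) *\<^sub>R matpow A n) $ a) \<le> (\<Sum>b\<in>UNIV. \<bar>((1 / fact n) *\<^sub>R matpow A n) $ a $ b\<bar>)"
        by (rule norm_le_l1_cart)
      also have "\<dots> \<le> (\<Sum>b\<in>(UNIV::'n set). inverse (fact n) * ?m ^ n)"
        by (rule sum_mono) (simp add: abs_mult divide_inverse mult_left_mono matpow_entry_bound)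
      finally show "norm (((1 / fact n) *\<^sub>R matpow A n) $ a) \<le> (\<Sum>b\<in>(UNIV::'n set). inverse (fact n) * ?m ^ n)" .
    qed
    also have "\<dots> = real (CARD('n) * CARD('n)) * (inverse (fact n) * ?m ^ n)"
      by simp
    finally show "norm ((1 / fact n) *\<^sub>R matpow A n) \<le> real (CARD('n) * CARD('n)) * (inverse (fact n) * ?m ^ n)" .
  qed
qed

lemma mexp_entry:
  fixes A :: "real^'n^'n"
  shows "mexp (x *\<^sub>R A) $ i $ j = (\<Sum>n. es A i j n * x ^ n)"
proof -
  have "mexp (x *\<^sub>R A) $ i $ j = (\<Sum>k. ((1 / fact k) *\<^sub>R matpow (x *\<^sub>R A) k) $ i $ j)"
    unfolding mexp_def
    using bounded_linear.suminf[OF bounded_linear_compose[OF bounded_linear_vec_nth bounded_linear_vec_nth] mexp_summable]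
    by (simp add: o_def)
  also have "\<dots> = (\<Sum>n. es A i j n * x ^ n)"
    by (simp add: matpow_scale es_def mult_ac)
  finally show ?thesis .
qed

lemma mexp_entry_deriv:
  fixes A :: "real^'n^'n"
  shows "((\<lambda>x. mexp (x *\<^sub>R A) $ i $ j) has_real_derivative
           (\<Sum>l\<in>UNIV. A $ i $ l * mexp (x *\<^sub>R A) $ l $ j)) (at x)"
proof -
  have d: "diffs (es A i j) n * x ^ n = (\<Sum>l\<in>UNIV. A $ i $ l * (es A l j n * x ^ n))" for n
  proof -
    have "diffs (es A i j) n = matpow A (Suc n) $ i $ j / fact n"
      by (simp add: diffs_def es_def field_simps del: of_nat_Suc)
    also have "\<dots> = (\<Sum>l\<in>UNIV. A $ i $ l * es A l j n)"
      by (simp add: es_def matrix_matrix_mult_def sum_divide_distrib)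
    finally show ?thesis by (simp add: sum_distrib_left mult_ac)
  qed
  have "(\<Sum>n. diffs (es A i j) n * x ^ n) = (\<Sum>n. \<Sum>l\<in>UNIV. A $ i $ l * (es A l j n * x ^ n))"
    by (simp add: d)
  also have "\<dots> = (\<Sum>l\<in>UNIV. \<Sum>n. A $ i $ l * (es A l j n * x ^ n))"
    by (rule suminf_sum) (intro summable_mult es_summable)
  also have "\<dots> = (\<Sum>l\<in>UNIV. A $ i $ l * mexp (x *\<^sub>R A) $ l $ j)"
    by (simp add: suminf_mult es_summable mexp_entry)
  finally have e: "(\<Sum>n. diffs (es A i j) n * x ^ n) = (\<Sum>l\<in>UNIV. A $ i $ l * mexp (x *\<^sub>R A) $ l $ j)" .
  have D: "((\<lambda>x. \<Sum>n. es A i j n * x ^ n) has_real_derivative (\<Sum>n. diffs (es A i j) n * x ^ n)) (at x)"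
    by (rule termdiffs_strong_converges_everywhere[OF es_summable])
  show ?thesis
    using D unfolding e[unfolded mexp_entry] mexp_entry .
qed

lemma mexp_zero_entry: "mexp (0 *\<^sub>R (A::real^'n^'n)) $ i $ j = (if i = j then 1 else 0)"
  unfolding mexp_entry powser_zero by (simp add: es_def mat_def)



lemma lin_ode_zero:
  fixes d :: "real \<Rightarrow> real^'n" and B :: "real^'n^'n"
  assumes der: "\<And>t i. t \<in> {a..b} \<Longrightarrow> ((\<lambda>s. d s $ i) has_real_derivative (\<Sum>j\<in>UNIV. B$i$j * d t $ j)) (at t within {a..b})"
    and db: "d b = 0" and t: "t \<in> {a..b}"
  shows "d t = 0"
proof -
  define f where "f s = (\<Sum>i\<in>UNIV. (d s $ i)^2)" for s
  define c where "c = 2 * (\<Sum>i\<in>UNIV. \<Sum>j\<in>UNIV. \<bar>B$i$j\<bar>)"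
  define f' where "f' s = (\<Sum>i\<in>UNIV. 2 * d s $ i * (\<Sum>j\<in>UNIV. B$i$j * d s $ j))" for s
  have fder: "(f has_real_derivative f' s) (at s within {a..b})" if "s \<in> {a..b}" for s
    unfolding f_def f'_def
    by (rule DERIV_sum, rule derivative_eq_intros, rule der[OF that]) (auto)
  have fnn: "0 \<le> f s" for s unfolding f_def by (auto intro: sum_nonneg)
  have sq: "(d s $ i)^2 \<le> f s" for s i
    unfolding f_def by (rule member_le_sum) auto
  have bnd: "\<bar>f' s\<bar> \<le> c * f s" for s
  proof -
    have pq: "\<bar>d s $ i\<bar> * \<bar>d s $ j\<bar> \<le> f s" for i j
    proof -
      have "2 * (\<bar>d s $ i\<bar> * \<bar>d s $ j\<bar>) \<le> (d s $ i)^2 + (d s $ j)^2"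
      proof -
        have "0 \<le> (\<bar>d s $ i\<bar> - \<bar>d s $ j\<bar>)^2" by simp
        then show ?thesis by (simp add: power2_diff power2_abs)
      qed
      with sq[of s i] sq[of s j] show ?thesis by linarith
    qed
    have "\<bar>f' s\<bar> \<le> (\<Sum>i\<in>UNIV. \<bar>2 * d s $ i * (\<Sum>j\<in>UNIV. B$i$j * d s $ j)\<bar>)"
      unfolding f'_def by (rule sum_abs)
    also have "\<dots> \<le> (\<Sum>i\<in>UNIV. \<Sum>j\<in>UNIV. 2 * \<bar>B$i$j\<bar> * f s)"
    proof (rule sum_mono)
      fix i
      have "\<bar>2 * d s $ i * (\<Sum>j\<in>UNIV. B$i$j * d s $ j)\<bar> = 2 * \<bar>d s $ i\<bar> * \<bar>\<Sum>j\<in>UNIV. B$i$j * d s $ j\<bar>"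
        by (simp add: abs_mult)
      also have "\<dots> \<le> 2 * \<bar>d s $ i\<bar> * (\<Sum>j\<in>UNIV. \<bar>B$i$j\<bar> * \<bar>d s $ j\<bar>)"
        by (intro mult_left_mono order_trans[OF sum_abs]) (auto simp: abs_mult)
      also have "\<dots> = (\<Sum>j\<in>UNIV. 2 * \<bar>B$i$j\<bar> * (\<bar>d s $ i\<bar> * \<bar>d s $ j\<bar>))"
        by (simp add: sum_distrib_left mult_ac)
      also have "\<dots> \<le> (\<Sum>j\<in>UNIV. 2 * \<bar>B$i$j\<bar> * f s)"
        by (intro sum_mono mult_left_mono pq) auto
      finally show "\<bar>2 * d s $ i * (\<Sum>j\<in>UNIV. B$i$j * d s $ j)\<bar> \<le> (\<Sum>j\<in>UNIV. 2 * \<bar>B$i$j\<bar> * f s)" .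
    qed
    also have "\<dots> = c * f s"
      by (simp add: c_def sum_distrib_left sum_distrib_right mult_ac)
    finally show ?thesis .
  qed
  define k where "k s = f s * exp (c * s)" for s
  have kder: "(k has_real_derivative (f' s + c * f s) * exp (c * s)) (at s within {a..b})" if "s \<in> {a..b}" for s
    unfolding k_def
    by (rule derivative_eq_intros fder[OF that] refl)+ (simp add: algebra_simps)
  have tb: "t \<le> b" using t by auto
  have "k t \<le> k b"
  proof (rule DERIV_nonneg_imp_increasing_open[OF tb])
    fix x assume x: "t < x" "x < b"
    then have xin: "x \<in> {a..b}" and "a < x" using t by auto
    have "(k has_real_derivative (f' x + c * f x) * exp (c * x)) (at x)"
      using kder[OF xin] at_within_Icc_at[OF \<open>a < x\<close> \<open>x < b\<close>] by simp
    moreover have "0 \<le> (f' x + c * f x) * exp (c * x)"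
      using bnd[of x] by (intro mult_nonneg_nonneg) auto
    ultimately show "\<exists>y. (k has_real_derivative y) (at x) \<and> 0 \<le> y" by blast
  next
    show "continuous_on {t..b} k"
      by (rule DERIV_continuous_on[where D="\<lambda>s. (f' s + c * f s) * exp (c * s)"])
         (rule DERIV_subset[OF kder], use t in auto)
  qed
  moreover have "k b = 0" by (simp add: k_def f_def db)
  ultimately have "f t \<le> 0" unfolding k_def
    by (metis exp_gt_zero mult_le_0_iff not_le)
  with fnn[of t] have "f t = 0" by simp
  then have "\<forall>i\<in>UNIV. (d t $ i)^2 = 0"
    unfolding f_def by (subst sum_nonneg_eq_0_iff[symmetric]) auto
  then show ?thesis by (simp add: vec_eq_iff)
qed



definition gv :: "real \<Rightarrow> real^'n^'n \<Rightarrow> real^'n^'n \<Rightarrow> ('n \<Rightarrow> real) \<Rightarrow> real \<Rightarrow> real^'n" where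
  "gv T Q Qt \<zeta> s = mexp ((T - s) *\<^sub>R Qt) *v alpha_vec Q Qt \<zeta>"

lemma gv_der:
  "((\<lambda>s. gv T Q Qt \<zeta> s $ i) has_real_derivative - (\<Sum>l\<in>UNIV. Qt $ i $ l * gv T Q Qt \<zeta> s $ l)) (at s within S)"
proof -
  let ?E = "\<lambda>x. mexp (x *\<^sub>R Qt)"
  let ?a = "alpha_vec Q Qt \<zeta>"
  have e: "((\<lambda>s. ?E (T - s) $ i $ j) has_real_derivative (\<Sum>l\<in>UNIV. Qt $ i $ l * ?E (T - s) $ l $ j) * (-1)) (at s within S)" for j
  proof -
    have "((\<lambda>s. T - s) has_real_derivative -1) (at s within S)"
      using DERIV_diff[OF DERIV_const DERIV_ident, of T s S] by simp
    from DERIV_chain2[of "\<lambda>x. ?E x $ i $ j", OF mexp_entry_deriv this]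
    show ?thesis .
  qed
  have "((\<lambda>s. \<Sum>j\<in>UNIV. ?E (T - s) $ i $ j * ?a $ j) has_real_derivative
         (\<Sum>j\<in>UNIV. (\<Sum>l\<in>UNIV. Qt $ i $ l * ?E (T - s) $ l $ j) * (-1) * ?a $ j)) (at s within S)"
    by (rule DERIV_sum, rule DERIV_cmult_right, rule e)
  moreover have "(\<Sum>j\<in>UNIV. (\<Sum>l\<in>UNIV. Qt $ i $ l * ?E (T - s) $ l $ j) * (-1) * ?a $ j)
      = - (\<Sum>l\<in>UNIV. Qt $ i $ l * gv T Q Qt \<zeta> s $ l)"
  proof -
    have "(\<Sum>j\<in>UNIV. (\<Sum>l\<in>UNIV. Qt $ i $ l * ?E (T - s) $ l $ j) * (-1) * ?a $ j)
        = - (\<Sum>j\<in>UNIV. \<Sum>l\<in>UNIV. Qt $ i $ l * (?E (T - s) $ l $ j * ?a $ j))"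
      by (simp add: sum_distrib_right sum_negf mult.assoc)
    also have "\<dots> = - (\<Sum>l\<in>UNIV. \<Sum>j\<in>UNIV. Qt $ i $ l * (?E (T - s) $ l $ j * ?a $ j))"
      by (rule arg_cong[where f=uminus], rule sum.swap)
    also have "\<dots> = - (\<Sum>l\<in>UNIV. Qt $ i $ l * gv T Q Qt \<zeta> s $ l)"
      by (simp add: gv_def matrix_vector_mult_def sum_distrib_left)
    finally show ?thesis .
  qed
  ultimately show ?thesis
    by (simp add: gv_def matrix_vector_mult_def)
qed

lemma gv_cont: "continuous_on S (gv T Q Qt \<zeta>)"
proof -
  have "gv T Q Qt \<zeta> = (\<lambda>s. \<chi> i. gv T Q Qt \<zeta> s $ i)" by (simp add: vec_eq_iff)
  moreover have "continuous_on S (\<lambda>s. \<chi> i. gv T Q Qt \<zeta> s $ i)"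
    by (rule continuous_on_vec_lambda, rule DERIV_continuous_on, rule gv_der)
  ultimately show ?thesis by simp
qed

lemma phi_gv: "phi T Q Qt \<zeta> s = - integral {s..T} (gv T Q Qt \<zeta>)"
  unfolding phi_def gv_def[abs_def] by (rule refl)

lemma phi_der:
  assumes t: "t \<in> {0..T}"
  shows "((\<lambda>s. phi T Q Qt \<zeta> s $ i) has_real_derivative gv T Q Qt \<zeta> t $ i) (at t within {0..T})"
proof -
  let ?g = "gv T Q Qt \<zeta>"
  have int: "?g integrable_on {0..T}" by (rule integrable_continuous_real, rule gv_cont)
  have eq: "phi T Q Qt \<zeta> s = integral {0..s} ?g - integral {0..T} ?g" if "s \<in> {0..T}" for s
  proof -
    have c: "integral {0..s} ?g + integral {s..T} ?g = integral {0..T} ?g"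
      using Henstock_Kurzweil_Integration.integral_combine[OF _ _ int, of s] that by auto
    show ?thesis unfolding phi_gv by (metis c add_diff_cancel_left' minus_diff_eq)
  qed
  have "((\<lambda>s. integral {0..s} ?g - integral {0..T} ?g) has_vector_derivative ?g t) (at t within {0..T})"
    using integral_has_vector_derivative[OF gv_cont t] by (rule derivative_eq_intros) auto
  then have "(phi T Q Qt \<zeta> has_vector_derivative ?g t) (at t within {0..T})"
    by (rule has_vector_derivative_transform[OF t eq, rotated]) 
  from bounded_linear.has_vector_derivative[OF bounded_linear_vec_nth this, of i]
  show ?thesis by (simp add: has_real_derivative_iff_has_vector_derivative)
qed

lemma phi_T: "phi T Q Qt \<zeta> T = 0"
  by (simp add: phi_def)

lemma gv_T: "gv T Q Qt \<zeta> T = alpha_vec Q Qt \<zeta>"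
proof -
  have m0: "mexp (0::real^'n^'n) $ i $ j * x = (if i = j then x else 0)" for i j and x :: real
    using mexp_zero_entry[of "0::real^'n^'n" i j] by simp
  show ?thesis by (simp add: gv_def vec_eq_iff matrix_vector_mult_def m0)
qed

lemma ode_rhs_alt:
  assumes "generator Qt"
  shows "ode_rhs Q Qt \<zeta> x i = alpha Q Qt \<zeta> i - (Qt *v x) $ i"
proof -
  have rs: "(\<Sum>j\<in>UNIV. Qt $ i $ j) = 0" using assms by (simp add: generator_def)
  have "(\<Sum>j\<in>UNIV. Qt $ i $ j) = Qt $ i $ i + (\<Sum>j\<in>UNIV - {i}. Qt $ i $ j)"
    by (simp add: sum.remove)
  moreover have "(Qt *v x) $ i = Qt $ i $ i * x $ i + (\<Sum>j\<in>UNIV - {i}. Qt $ i $ j * x $ j)"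
    by (simp add: matrix_vector_mult_def sum.remove)
  moreover have "(\<Sum>j\<in>UNIV - {i}. Qt $ i $ j * (x $ i - x $ j)) = x $ i * (\<Sum>j\<in>UNIV - {i}. Qt $ i $ j) - (\<Sum>j\<in>UNIV - {i}. Qt $ i $ j * x $ j)"
    by (simp add: right_diff_distrib sum_subtractf sum_distrib_left mult.commute)
  moreover have S: "(\<Sum>j\<in>UNIV - {i}. Qt $ i $ j) = - Qt $ i $ i"
    using rs \<open>(\<Sum>j\<in>UNIV. Qt $ i $ j) = Qt $ i $ i + (\<Sum>j\<in>UNIV - {i}. Qt $ i $ j)\<close> by linarith
  ultimately show ?thesis
    by (simp add: ode_rhs_def algebra_simps)
qed

lemma phi_ode:
  fixes Qt :: "real^'n^'n"
  assumes gen: "generator Qt" and t: "t \<in> {0..T}"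
  shows "gv T Q Qt \<zeta> t $ i = ode_rhs Q Qt \<zeta> (phi T Q Qt \<zeta> t) i"
proof -
  let ?g = "gv T Q Qt \<zeta>" and ?p = "phi T Q Qt \<zeta>" and ?a = "alpha_vec Q Qt \<zeta>"
  define h where "h s = ?g s + Qt *v ?p s - ?a" for s
  have "h t = 0"
  proof (rule lin_ode_zero[where B = "0::real^'n^'n" and a = 0 and b = T])
    fix s and k :: 'n assume s: "s \<in> {0..T}"
    have "((\<lambda>s. ?g s $ k + (\<Sum>l\<in>UNIV. Qt $ k $ l * ?p s $ l) - ?a $ k) has_real_derivative
          - (\<Sum>l\<in>UNIV. Qt $ k $ l * ?g s $ l) + (\<Sum>l\<in>UNIV. Qt $ k $ l * ?g s $ l) - 0) (at s within {0..T})"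
      by (intro DERIV_diff DERIV_add gv_der DERIV_sum DERIV_cmult phi_der s DERIV_const)
    then show "((\<lambda>s. h s $ k) has_real_derivative (\<Sum>j\<in>UNIV. (0::real^'n^'n) $ k $ j * h s $ j)) (at s within {0..T})"
      by (simp add: h_def matrix_vector_mult_def)
  next
    show "h T = 0" by (simp add: h_def phi_T gv_T)
  qed (use t in auto)
  then have "?g t $ i = ?a $ i - (Qt *v ?p t) $ i"
    by (simp add: h_def vec_eq_iff algebra_simps)
  then show ?thesis by (simp add: ode_rhs_alt[OF gen] alpha_vec_def)
qed



lemma exp_eq_one_plus: "exp (x::real) = 1 + x \<Longrightarrow> x = 0"
proof (rule ccontr)
  assume e: "exp x = 1 + x" and x: "x \<noteq> 0"
  show False
  proof (cases "1 + x / 2 \<ge> 0")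
    case True
    have "(1 + x/2) * (1 + x/2) \<le> exp (x/2) * exp (x/2)"
      using True exp_ge_add_one_self[of "x/2"] by (intro mult_mono) auto
    also have "\<dots> = exp x" by (simp flip: exp_add)
    finally have "1 + x + x*x/4 \<le> exp x" by (simp add: algebra_simps)
    moreover have "x * x > 0" using x by (auto simp: zero_less_mult_iff linorder_neq_iff)
    ultimately show False using e by linarith
  next
    case False
    then have "1 + x < 0" by linarith
    with e show False using exp_gt_zero[of x] by linarith
  qed
qed

definition Dt :: "real^'n^'n \<Rightarrow> real^'n^'n \<Rightarrow> real \<Rightarrow> real^'n \<Rightarrow> 'n \<Rightarrow> 'n \<Rightarrow> real \<Rightarrow> real" where
  "Dt Q Qt \<gamma> y i j p = Qt $ i $ j * (exp (- \<gamma> * p + y $ j - y $ i - ln (Qt $ i $ j / Q $ i $ j)) - 1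
       - (- \<gamma> * p + y $ j - y $ i - ln (Qt $ i $ j / Q $ i $ j)))"

lemma Dt_nonneg:
  assumes "generator Qt" "i \<noteq> j"
  shows "0 \<le> Dt Q Qt \<gamma> y i j p"
proof -
  have "0 \<le> exp z - 1 - z" for z :: real using exp_ge_add_one_self[of z] by linarith
  moreover have "0 \<le> Qt $ i $ j" using assms by (auto simp: generator_def)
  ultimately show ?thesis unfolding Dt_def by (intro mult_nonneg_nonneg) auto
qed

lemma hjb_key:
  fixes Q Qt :: "real^'n^'n" and y :: "real^'n"
  assumes genQ: "generator Q" and genQt: "generator Qt"
    and supp: "\<And>i j. i \<noteq> j \<Longrightarrow> (Q $ i $ j = 0 \<longleftrightarrow> Qt $ i $ j = 0)"
  shows "hjb_term Q Qt \<zeta> (\<lambda>j x. - exp (- \<gamma> * x + y $ j)) i w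
           (\<gamma> * exp (- \<gamma> * w + y $ i)) (- (\<gamma>\<^sup>2 * exp (- \<gamma> * w + y $ i))) c
       = exp (- \<gamma> * w + y $ i) * (ode_rhs Q Qt \<zeta> y i - (\<gamma> * fst c - \<zeta> i)\<^sup>2 / 2
            - (\<Sum>j\<in>UNIV - {i}. Dt Q Qt \<gamma> y i j (snd c j)))"
proof -
  define K where "K = exp (- \<gamma> * w + y $ i)"
  define G where "G j = Qt $ i $ j * (ln (Qt $ i $ j / Q $ i $ j) + y $ i - y $ j) + Q $ i $ j - Qt $ i $ j" for j
  have termj: "Q $ i $ j * (- exp (- \<gamma> * (w + p) + y $ j) - - exp (- \<gamma> * w + y $ i)) - Qt $ i $ j * p * (\<gamma> * K)
      = K * (G j - Dt Q Qt \<gamma> y i j p)" if j: "j \<in> UNIV - {i}" for j p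
  proof (cases "Q $ i $ j = 0")
    case True
    with supp j have "Qt $ i $ j = 0" by auto
    with True show ?thesis by (simp add: G_def Dt_def)
  next
    case False
    have qpos: "Q $ i $ j > 0" using False genQ j by (auto simp: generator_def less_le)
    have qtpos: "Qt $ i $ j > 0" using False supp[of i j] genQt j by (auto simp: generator_def less_le)
    define L where "L = ln (Qt $ i $ j / Q $ i $ j)"
    define a where "a = - \<gamma> * p + y $ j - y $ i"
    have eL: "exp L = Qt $ i $ j / Q $ i $ j" using qpos qtpos by (simp add: L_def)
    have ea: "exp a = exp (a - L) * (Qt $ i $ j / Q $ i $ j)"
      by (simp flip: eL exp_add)
    have e1: "exp (- \<gamma> * (w + p) + y $ j) = K * exp a"
      by (simp add: K_def a_def flip: exp_add) (simp add: algebra_simps)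
    have "Q $ i $ j * (- exp (- \<gamma> * (w + p) + y $ j) - - exp (- \<gamma> * w + y $ i)) - Qt $ i $ j * p * (\<gamma> * K)
        = K * (Q $ i $ j - Qt $ i $ j * exp (a - L) - \<gamma> * Qt $ i $ j * p)"
      unfolding e1 ea K_def[symmetric] using qpos by (simp add: field_simps)
    also have "\<dots> = K * (G j - Dt Q Qt \<gamma> y i j p)"
    proof -
      have D: "Dt Q Qt \<gamma> y i j p = Qt $ i $ j * (exp (a - L) - 1 - (a - L))"
        by (simp add: Dt_def a_def L_def)
      have G: "G j = Qt $ i $ j * (L + y $ i - y $ j) + Q $ i $ j - Qt $ i $ j"
        by (simp add: G_def L_def)
      show ?thesis unfolding D G by (simp add: a_def algebra_simps)
    qed
    finally show ?thesis .
  qed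
  have sumG: "\<zeta> i ^ 2 / 2 + (\<Sum>j\<in>UNIV - {i}. G j) = ode_rhs Q Qt \<zeta> y i"
  proof -
    have "(\<Sum>j\<in>UNIV - {i}. Qt $ i $ j * ln (Qt $ i $ j / Q $ i $ j) - Qt $ i $ j + Q $ i $ j)
        = (\<Sum>j\<in>{j. j \<noteq> i \<and> Q $ i $ j > 0}. Qt $ i $ j * ln (Qt $ i $ j / Q $ i $ j) - Qt $ i $ j + Q $ i $ j)"
    proof (rule sum.mono_neutral_right)
      show "\<forall>j\<in>UNIV - {i} - {j. j \<noteq> i \<and> Q $ i $ j > 0}. Qt $ i $ j * ln (Qt $ i $ j / Q $ i $ j) - Qt $ i $ j + Q $ i $ j = 0"
      proof
        fix j assume "j \<in> UNIV - {i} - {j. j \<noteq> i \<and> Q $ i $ j > 0}"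
        then have "j \<noteq> i" "Q $ i $ j = 0" using genQ by (auto simp: generator_def less_le)
        then show "Qt $ i $ j * ln (Qt $ i $ j / Q $ i $ j) - Qt $ i $ j + Q $ i $ j = 0" using supp by auto
      qed
    qed auto
    then show ?thesis
      by (simp add: G_def ode_rhs_def alpha_def sum.distrib sum_subtractf algebra_simps)
  qed
  have "hjb_term Q Qt \<zeta> (\<lambda>j x. - exp (- \<gamma> * x + y $ j)) i w (\<gamma> * K) (- (\<gamma>\<^sup>2 * K)) c
      = \<zeta> i * fst c * (\<gamma> * K) - (fst c)\<^sup>2 / 2 * (\<gamma>\<^sup>2 * K)
        + (\<Sum>j\<in>UNIV - {i}. Q $ i $ j * (- exp (- \<gamma> * (w + snd c j) + y $ j) - - exp (- \<gamma> * w + y $ i))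
              - Qt $ i $ j * snd c j * (\<gamma> * K))"
    by (simp add: hjb_term_def sum_subtractf sum.distrib sum_distrib_left sum_distrib_right algebra_simps)
  also have "\<dots> = \<zeta> i * fst c * (\<gamma> * K) - (fst c)\<^sup>2 / 2 * (\<gamma>\<^sup>2 * K)
        + (\<Sum>j\<in>UNIV - {i}. K * (G j - Dt Q Qt \<gamma> y i j (snd c j)))"
    by (rule arg_cong[where f="\<lambda>z. _ + z"], rule sum.cong[OF refl termj])
  also have "\<dots> = K * ((\<zeta> i ^ 2 / 2 + (\<Sum>j\<in>UNIV - {i}. G j)) - (\<gamma> * fst c - \<zeta> i)\<^sup>2 / 2
            - (\<Sum>j\<in>UNIV - {i}. Dt Q Qt \<gamma> y i j (snd c j)))"
    by (simp add: sum_distrib_left sum_subtractf power2_eq_square algebra_simps add_divide_distrib diff_divide_distrib)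
  finally show ?thesis unfolding sumG K_def .
qed



theorem mainTheorem1:
  fixes Q Qt :: "real^'n^'n" and \<zeta> :: "'n \<Rightarrow> real" and \<gamma> T :: real
  assumes gamma_pos: "\<gamma> > 0" and T_pos: "T > 0"
    and genQ: "generator Q" and genQt: "generator Qt"
    and irrQ: "irreducible_gen Q" and irrQt: "irreducible_gen Qt"
    and supp: "\<And>i j. i \<noteq> j \<Longrightarrow> (Q $ i $ j = 0 \<longleftrightarrow> Qt $ i $ j = 0)"
  shows
    \<comment> \<open>phi solves the terminal value problem ...\<close>
    "(\<forall>t\<in>{0..T}. \<forall>i. ((\<lambda>s. phi T Q Qt \<zeta> s $ i) has_real_derivative
          ode_rhs Q Qt \<zeta> (phi T Q Qt \<zeta> t) i) (at t within {0..T}))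
     \<and> phi T Q Qt \<zeta> T = 0
     \<comment> \<open>... and is its unique solution\<close>
     \<and> (\<forall>\<psi> :: real \<Rightarrow> real^'n.
          (\<forall>t\<in>{0..T}. \<forall>i. ((\<lambda>s. \<psi> s $ i) has_real_derivative ode_rhs Q Qt \<zeta> (\<psi> t) i)
                (at t within {0..T})) \<and> \<psi> T = 0
          \<longrightarrow> (\<forall>t\<in>{0..T}. \<psi> t = phi T Q Qt \<zeta> t))
     \<comment> \<open>terminal condition of u\<close>
     \<and> (\<forall>i w. uval \<gamma> T Q Qt \<zeta> i T w = - exp (- \<gamma> * w))
     \<comment> \<open>u is a classical solution of the HJB system, with the stated maximizers\<close>
     \<and> (\<forall>i. \<exists>ut uw uww :: real \<Rightarrow> real \<Rightarrow> real.
          continuous_on ({0..T} \<times> UNIV) (\<lambda>(t, w). ut t w)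
        \<and> continuous_on ({0..T} \<times> UNIV) (\<lambda>(t, w). uw t w)
        \<and> continuous_on ({0..T} \<times> UNIV) (\<lambda>(t, w). uww t w)
        \<and> (\<forall>t\<in>{0..T}. \<forall>w.
              ((\<lambda>s. uval \<gamma> T Q Qt \<zeta> i s w) has_real_derivative ut t w) (at t within {0..T})
            \<and> ((\<lambda>x. uval \<gamma> T Q Qt \<zeta> i t x) has_real_derivative uw t w) (at w)
            \<and> ((\<lambda>x. uw t x) has_real_derivative uww t w) (at w)
            \<and> uww t w = \<gamma>\<^sup>2 * uval \<gamma> T Q Qt \<zeta> i t w
            \<and> uww t w < 0)
        \<and> (\<forall>t\<in>{0..<T}. \<forall>w.
              let H = hjb_term Q Qt \<zeta> (\<lambda>j x. uval \<gamma> T Q Qt \<zeta> j t x) i w (uw t w) (uww t w);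
                  cstar = (\<zeta> i / \<gamma>, pi_star \<gamma> T Q Qt \<zeta> i t)
              in ut t w + (SUP c. H c) = 0
               \<and> (\<forall>c. H c \<le> H cstar)
               \<and> (\<forall>c. (\<forall>c'. H c' \<le> H c) \<longrightarrow>
                     fst c = \<zeta> i / \<gamma> \<and>
                     (\<forall>j. j \<noteq> i \<and> Q $ i $ j > 0 \<longrightarrow> snd c j = pi_star \<gamma> T Q Qt \<zeta> i t j))))"
proof -
  let ?p = "phi T Q Qt \<zeta>"
  have der': "((\<lambda>s. ?p s $ i) has_real_derivative ode_rhs Q Qt \<zeta> (?p t) i) (at t within {0..T})"
    if t: "t \<in> {0..T}" for t i
    using phi_der[OF t, of Q Qt \<zeta> i] phi_ode[OF genQt t, of Q \<zeta> i] by simp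
  have pT: "?p T = 0" by (rule phi_T)
  have uniq: "\<forall>\<psi> :: real \<Rightarrow> real^'n.
          (\<forall>t\<in>{0..T}. \<forall>i. ((\<lambda>s. \<psi> s $ i) has_real_derivative ode_rhs Q Qt \<zeta> (\<psi> t) i)
                (at t within {0..T})) \<and> \<psi> T = 0
          \<longrightarrow> (\<forall>t\<in>{0..T}. \<psi> t = ?p t)"
  proof (intro allI impI ballI)
    fix \<psi> :: "real \<Rightarrow> real^'n" and t
    assume H: "(\<forall>t\<in>{0..T}. \<forall>i. ((\<lambda>s. \<psi> s $ i) has_real_derivative ode_rhs Q Qt \<zeta> (\<psi> t) i)
                (at t within {0..T})) \<and> \<psi> T = 0" and t: "t \<in> {0..T}"
    have "(\<lambda>s. \<psi> s - ?p s) t = 0"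
    proof (rule lin_ode_zero[where B="-Qt" and a=0 and b=T])
      fix s and i :: 'n assume s: "s \<in> {0..T}"
      have "((\<lambda>s. \<psi> s $ i - ?p s $ i) has_real_derivative ode_rhs Q Qt \<zeta> (\<psi> s) i - ode_rhs Q Qt \<zeta> (?p s) i) (at s within {0..T})"
        using H der'[OF s] s by (intro DERIV_diff) auto
      moreover have "ode_rhs Q Qt \<zeta> (\<psi> s) i - ode_rhs Q Qt \<zeta> (?p s) i = (\<Sum>j\<in>UNIV. (-Qt)$i$j * (\<psi> s - ?p s)$j)"
        by (simp add: ode_rhs_alt[OF genQt] matrix_vector_mult_def sum_subtractf right_diff_distrib sum_negf)
      ultimately show "((\<lambda>s. (\<psi> s - ?p s) $ i) has_real_derivative (\<Sum>j\<in>UNIV. (-Qt)$i$j * (\<psi> s - ?p s)$j)) (at s within {0..T})"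
        by simp
    next
      show "\<psi> T - ?p T = 0" using H pT by simp
    qed (use t in auto)
    then show "\<psi> t = ?p t" by simp
  qed
  have uT: "\<forall>i w. uval \<gamma> T Q Qt \<zeta> i T w = - exp (- \<gamma> * w)" by (simp add: uval_def pT)
  have hjb: "\<forall>i. \<exists>ut uw uww :: real \<Rightarrow> real \<Rightarrow> real.
          continuous_on ({0..T} \<times> UNIV) (\<lambda>(t, w). ut t w)
        \<and> continuous_on ({0..T} \<times> UNIV) (\<lambda>(t, w). uw t w)
        \<and> continuous_on ({0..T} \<times> UNIV) (\<lambda>(t, w). uww t w)
        \<and> (\<forall>t\<in>{0..T}. \<forall>w.
              ((\<lambda>s. uval \<gamma> T Q Qt \<zeta> i s w) has_real_derivative ut t w) (at t within {0..T})
            \<and> ((\<lambda>x. uval \<gamma> T Q Qt \<zeta> i t x) has_real_derivative uw t w) (at w)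
            \<and> ((\<lambda>x. uw t x) has_real_derivative uww t w) (at w)
            \<and> uww t w = \<gamma>\<^sup>2 * uval \<gamma> T Q Qt \<zeta> i t w
            \<and> uww t w < 0)
        \<and> (\<forall>t\<in>{0..<T}. \<forall>w.
              let H = hjb_term Q Qt \<zeta> (\<lambda>j x. uval \<gamma> T Q Qt \<zeta> j t x) i w (uw t w) (uww t w);
                  cstar = (\<zeta> i / \<gamma>, pi_star \<gamma> T Q Qt \<zeta> i t)
              in ut t w + (SUP c. H c) = 0
               \<and> (\<forall>c. H c \<le> H cstar)
               \<and> (\<forall>c. (\<forall>c'. H c' \<le> H c) \<longrightarrow>
                     fst c = \<zeta> i / \<gamma> \<and>
                     (\<forall>j. j \<noteq> i \<and> Q $ i $ j > 0 \<longrightarrow> snd c j = pi_star \<gamma> T Q Qt \<zeta> i t j)))"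
  proof
    fix i
    define ut where "ut t w = - exp (- \<gamma> * w + ?p t $ i) * ode_rhs Q Qt \<zeta> (?p t) i" for t w
    define uw where "uw t w = \<gamma> * exp (- \<gamma> * w + ?p t $ i)" for t w
    define uww where "uww t w = - (\<gamma>\<^sup>2 * exp (- \<gamma> * w + ?p t $ i))" for t w
    have pcont: "continuous_on {0..T} (\<lambda>s. ?p s $ j)" for j
      by (rule DERIV_continuous_on, rule der')
    have pc2: "continuous_on ({0..T} \<times> UNIV) (\<lambda>x. ?p (fst x) $ j)" for j
      by (rule continuous_on_compose2[OF pcont[of j] continuous_on_fst]) auto
    have c1: "continuous_on ({0..T} \<times> UNIV) (\<lambda>(t, w). ut t w)"
      unfolding ut_def case_prod_unfold ode_rhs_def
      by (intro continuous_intros pc2)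
    have c2: "continuous_on ({0..T} \<times> UNIV) (\<lambda>(t, w). uw t w)"
      unfolding uw_def case_prod_unfold
      by (intro continuous_intros pc2)
    have c3: "continuous_on ({0..T} \<times> UNIV) (\<lambda>(t, w). uww t w)"
      unfolding uww_def case_prod_unfold
      by (intro continuous_intros pc2)
    have ds: "\<forall>t\<in>{0..T}. \<forall>w.
              ((\<lambda>s. uval \<gamma> T Q Qt \<zeta> i s w) has_real_derivative ut t w) (at t within {0..T})
            \<and> ((\<lambda>x. uval \<gamma> T Q Qt \<zeta> i t x) has_real_derivative uw t w) (at w)
            \<and> ((\<lambda>x. uw t x) has_real_derivative uww t w) (at w)
            \<and> uww t w = \<gamma>\<^sup>2 * uval \<gamma> T Q Qt \<zeta> i t w
            \<and> uww t w < 0"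
    proof (intro ballI allI conjI)
      fix t w assume t: "t \<in> {0..T}"
      show "((\<lambda>s. uval \<gamma> T Q Qt \<zeta> i s w) has_real_derivative ut t w) (at t within {0..T})"
        unfolding uval_def ut_def
        by (rule derivative_eq_intros der'[OF t] refl)+ simp
      show "((\<lambda>x. uval \<gamma> T Q Qt \<zeta> i t x) has_real_derivative uw t w) (at w)"
        unfolding uval_def uw_def
        by (rule derivative_eq_intros refl)+ simp
      show "((\<lambda>x. uw t x) has_real_derivative uww t w) (at w)"
        unfolding uww_def uw_def
        by (rule derivative_eq_intros refl)+ (simp add: power2_eq_square)
      show "uww t w = \<gamma>\<^sup>2 * uval \<gamma> T Q Qt \<zeta> i t w"
        by (simp add: uww_def uval_def)
      show "uww t w < 0" using gamma_pos by (simp add: uww_def)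
    qed
    have hj: "\<forall>t\<in>{0..<T}. \<forall>w.
              let H = hjb_term Q Qt \<zeta> (\<lambda>j x. uval \<gamma> T Q Qt \<zeta> j t x) i w (uw t w) (uww t w);
                  cstar = (\<zeta> i / \<gamma>, pi_star \<gamma> T Q Qt \<zeta> i t)
              in ut t w + (SUP c. H c) = 0
               \<and> (\<forall>c. H c \<le> H cstar)
               \<and> (\<forall>c. (\<forall>c'. H c' \<le> H c) \<longrightarrow>
                     fst c = \<zeta> i / \<gamma> \<and>
                     (\<forall>j. j \<noteq> i \<and> Q $ i $ j > 0 \<longrightarrow> snd c j = pi_star \<gamma> T Q Qt \<zeta> i t j))"
    proof (intro ballI allI)
      fix t w assume t: "t \<in> {0..<T}"
      define H where "H = hjb_term Q Qt \<zeta> (\<lambda>j x. uval \<gamma> T Q Qt \<zeta> j t x) i w (uw t w) (uww t w)"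
      define cstar where "cstar = (\<zeta> i / \<gamma>, pi_star \<gamma> T Q Qt \<zeta> i t)"
      define K where "K = exp (- \<gamma> * w + ?p t $ i)"
      define R where "R = ode_rhs Q Qt \<zeta> (?p t) i"
      define S where "S c = (\<gamma> * fst c - \<zeta> i)\<^sup>2 / 2 + (\<Sum>j\<in>UNIV - {i}. Dt Q Qt \<gamma> (?p t) i j (snd c j))" for c
      have Kpos: "K > 0" by (simp add: K_def)
      have Hc: "H c = K * (R - S c)" for c
        unfolding H_def uval_def uw_def uww_def K_def R_def S_def
        using hjb_key[OF genQ genQt supp, of \<zeta> \<gamma> "?p t" i w c] by (simp add: algebra_simps)
      have Snn: "S c \<ge> 0" for c
        unfolding S_def by (intro add_nonneg_nonneg sum_nonneg Dt_nonneg[OF genQt]) auto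
      have Sstar: "S cstar = 0"
      proof -
        have "Dt Q Qt \<gamma> (?p t) i j (pi_star \<gamma> T Q Qt \<zeta> i t j) = 0" for j
          unfolding Dt_def pi_star_def using gamma_pos by (simp add: field_simps)
        then show ?thesis using gamma_pos by (simp add: S_def cstar_def)
      qed
      have Hstar: "H cstar = K * R" using Hc Sstar by simp
      have le: "H c \<le> H cstar" for c
        using Hc[of c] Hstar mult_nonneg_nonneg[OF less_imp_le[OF Kpos] Snn[of c]] by (simp add: right_diff_distrib)
      have sup: "(SUP c. H c) = H cstar"
        by (rule cSup_eq_maximum) (auto intro: le)
      have utv: "ut t w = - (K * R)" by (simp add: ut_def K_def R_def)
      have un: "fst c = \<zeta> i / \<gamma> \<and> (\<forall>j. j \<noteq> i \<and> Q $ i $ j > 0 \<longrightarrow> snd c j = pi_star \<gamma> T Q Qt \<zeta> i t j)"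
        if mx: "\<forall>c'. H c' \<le> H c" for c
      proof -
        have "H cstar \<le> H c" using mx by blast
        then have "K * S c \<le> 0" using Hc[of c] Hstar by (simp add: algebra_simps)
        then have S0: "S c = 0" using Kpos Snn[of c] by (simp add: mult_le_0_iff)
        have a0: "0 \<le> (\<gamma> * fst c - \<zeta> i)\<^sup>2 / 2" by simp
        have b0: "0 \<le> (\<Sum>j\<in>UNIV - {i}. Dt Q Qt \<gamma> (?p t) i j (snd c j))"
          by (intro sum_nonneg Dt_nonneg[OF genQt]) auto
        have sq0: "(\<gamma> * fst c - \<zeta> i)\<^sup>2 / 2 = 0" and sm0: "(\<Sum>j\<in>UNIV - {i}. Dt Q Qt \<gamma> (?p t) i j (snd c j)) = 0"
          using S0 a0 b0 unfolding S_def by linarith+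
        from sq0 have "fst c = \<zeta> i / \<gamma>" using gamma_pos by (simp add: field_simps)
        moreover have "snd c j = pi_star \<gamma> T Q Qt \<zeta> i t j" if j: "j \<noteq> i \<and> Q $ i $ j > 0" for j
        proof -
          have "Dt Q Qt \<gamma> (?p t) i j (snd c j) = 0"
            using sm0 sum_nonneg_eq_0_iff[of "UNIV - {i}" "\<lambda>j. Dt Q Qt \<gamma> (?p t) i j (snd c j)"]
              Dt_nonneg[OF genQt] j by auto
          moreover have "Qt $ i $ j > 0"
            using j supp[of i j] genQt by (auto simp: generator_def less_le)
          ultimately have "exp (- \<gamma> * snd c j + ?p t $ j - ?p t $ i - ln (Qt $ i $ j / Q $ i $ j)) =
                1 + (- \<gamma> * snd c j + ?p t $ j - ?p t $ i - ln (Qt $ i $ j / Q $ i $ j))"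
            unfolding Dt_def by simp
          then have "- \<gamma> * snd c j + ?p t $ j - ?p t $ i - ln (Qt $ i $ j / Q $ i $ j) = 0"
            by (rule exp_eq_one_plus)
          then show ?thesis using gamma_pos unfolding pi_star_def by (simp add: field_simps)
        qed
        ultimately show ?thesis by blast
      qed
      show "let H = hjb_term Q Qt \<zeta> (\<lambda>j x. uval \<gamma> T Q Qt \<zeta> j t x) i w (uw t w) (uww t w);
                  cstar = (\<zeta> i / \<gamma>, pi_star \<gamma> T Q Qt \<zeta> i t)
              in ut t w + (SUP c. H c) = 0
               \<and> (\<forall>c. H c \<le> H cstar)
               \<and> (\<forall>c. (\<forall>c'. H c' \<le> H c) \<longrightarrow>
                     fst c = \<zeta> i / \<gamma> \<and>
                     (\<forall>j. j \<noteq> i \<and> Q $ i $ j > 0 \<longrightarrow> snd c j = pi_star \<gamma> T Q Qt \<zeta> i t j))"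
        unfolding Let_def H_def[symmetric] cstar_def[symmetric]
        using sup utv Hstar le un by simp
    qed
    show "\<exists>ut uw uww :: real \<Rightarrow> real \<Rightarrow> real.
          continuous_on ({0..T} \<times> UNIV) (\<lambda>(t, w). ut t w)
        \<and> continuous_on ({0..T} \<times> UNIV) (\<lambda>(t, w). uw t w)
        \<and> continuous_on ({0..T} \<times> UNIV) (\<lambda>(t, w). uww t w)
        \<and> (\<forall>t\<in>{0..T}. \<forall>w.
              ((\<lambda>s. uval \<gamma> T Q Qt \<zeta> i s w) has_real_derivative ut t w) (at t within {0..T})
            \<and> ((\<lambda>x. uval \<gamma> T Q Qt \<zeta> i t x) has_real_derivative uw t w) (at w)
            \<and> ((\<lambda>x. uw t x) has_real_derivative uww t w) (at w)
            \<and> uww t w = \<gamma>\<^sup>2 * uval \<gamma> T Q Qt \<zeta> i t w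
            \<and> uww t w < 0)
        \<and> (\<forall>t\<in>{0..<T}. \<forall>w.
              let H = hjb_term Q Qt \<zeta> (\<lambda>j x. uval \<gamma> T Q Qt \<zeta> j t x) i w (uw t w) (uww t w);
                  cstar = (\<zeta> i / \<gamma>, pi_star \<gamma> T Q Qt \<zeta> i t)
              in ut t w + (SUP c. H c) = 0
               \<and> (\<forall>c. H c \<le> H cstar)
               \<and> (\<forall>c. (\<forall>c'. H c' \<le> H c) \<longrightarrow>
                     fst c = \<zeta> i / \<gamma> \<and>
                     (\<forall>j. j \<noteq> i \<and> Q $ i $ j > 0 \<longrightarrow> snd c j = pi_star \<gamma> T Q Qt \<zeta> i t j)))"
      using c1 c2 c3 ds hj by blast
  qed
  show ?thesis
    using der' pT uniq uT hjb by blast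
qed


end
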